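(* Let $X$ be a continuous random variable with mean $\mu$ and density $f$ satisfying $\int_{-\infty}^{x}(\mu-t)f(t)\,dt=q(x)f(x)$ for all $x\in\mathbb{R}$, where $q(x)=\delta(x-\mu)^2+\beta(x-\mu)+\gamma$. Then $X$ is symmetric if and only if $\beta=0$.
   Context: $X$ symmetric means that $X-c$ and $c-X$ have the same distribution for some $c\in\mathbb{R}$. *)

theory Defs
  imports "HOL-Probability.Probability"
begin

definition symmetric_rv :: "'a measure \<Rightarrow> ('a \<Rightarrow> real) \<Rightarrow> bool" where
  "symmetric_rv M X \<longleftrightarrow>
     (\<exists>c::real. distr M borel (\<lambda>\<omega>. X \<omega> - c) = distr M borel (\<lambda>\<omega>. c - X \<omega>))"

end

theory Submission
  imports Defs
begin


lemma refl_nn: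
  fixes h :: "real \<Rightarrow> ennreal"
  assumes [measurable]: "h \<in> borel_measurable borel"
  shows "(\<integral>\<^sup>+x. h (2*c - x) \<partial>lborel) = (\<integral>\<^sup>+x. h x \<partial>lborel)"
  using nn_integral_real_affine[OF assms, of "-1" "2*c"] by simp

lemma refl_integrable:
  fixes h :: "real \<Rightarrow> real"
  shows "integrable lborel (\<lambda>x. h (2*c - x)) \<longleftrightarrow> integrable lborel h"
  using lborel_integrable_real_affine_iff[of "-1" h "2*c"] by simp

lemma refl_integral:
  fixes h :: "real \<Rightarrow> real"
  shows "(\<integral>x. h (2*c - x) \<partial>lborel) = (\<integral>x. h x \<partial>lborel)"
  using lborel_integral_real_affine[of "-1" h "2*c"] by simp

lemma distr_refl:
  fixes g :: "real \<Rightarrow> ennreal"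
  assumes [measurable]: "g \<in> borel_measurable borel"
  shows "distr (density lborel g) borel (\<lambda>x. 2*c - x) = density lborel (\<lambda>x. g (2*c - x))"
proof (rule measure_eqI)
  show "sets (distr (density lborel g) borel (\<lambda>x. 2*c - x)) = sets (density lborel (\<lambda>x. g (2*c - x)))"
    by simp
  fix A assume "A \<in> sets (distr (density lborel g) borel (\<lambda>x. 2*c - x))"
  then have A[measurable]: "A \<in> sets borel" by simp
  have "emeasure (distr (density lborel g) borel (\<lambda>x. 2*c - x)) A
      = (\<integral>\<^sup>+x. g x * indicator ((\<lambda>x. 2*c - x) -` A) x \<partial>lborel)"
  proof -
    have m: "(\<lambda>x. 2*c - x) -` A \<in> sets lborel"
      using measurable_sets[of "\<lambda>x. 2*c - x" lborel borel A] A by simp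
    show ?thesis apply (simp add: emeasure_distr) by (rule emeasure_density[OF _ m]) simp
  qed
  also have "\<dots> = (\<integral>\<^sup>+x. g (2*c-x) * indicator ((\<lambda>x. 2*c - x) -` A) (2*c-x) \<partial>lborel)"
    by (rule refl_nn[symmetric]) simp
  also have "\<dots> = (\<integral>\<^sup>+x. g (2*c-x) * indicator A x \<partial>lborel)"
    by (simp add: indicator_def)
  also have "\<dots> = emeasure (density lborel (\<lambda>x. g (2*c - x))) A"
    by (simp add: emeasure_density)
  finally show "emeasure (distr (density lborel g) borel (\<lambda>x. 2*c - x)) A = emeasure (density lborel (\<lambda>x. g (2*c - x))) A" .
qed

lemma sym_iff:
  fixes X :: "'a \<Rightarrow> real" and g :: "real \<Rightarrow> ennreal"
  assumes d: "distributed M lborel X g"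
  shows "distr M borel (\<lambda>\<omega>. X \<omega> - c) = distr M borel (\<lambda>\<omega>. c - X \<omega>)
     \<longleftrightarrow> density lborel g = density lborel (\<lambda>x. g (2*c - x))"
proof -
  have [measurable]: "X \<in> measurable M borel" "g \<in> borel_measurable borel"
    using d by (auto simp: distributed_def)
  define D where "D = density lborel g"
  have DX: "distr M lborel X = D" using d by (simp add: distributed_def D_def)
  have sD: "sets D = sets borel" by (simp add: D_def)
  have e1: "distr M borel (\<lambda>\<omega>. X \<omega> - c) = distr D borel (\<lambda>x. x - c)"
    unfolding DX[symmetric] by (subst distr_distr) (auto simp: comp_def)
  have e2: "distr M borel (\<lambda>\<omega>. c - X \<omega>) = distr (distr D borel (\<lambda>x. 2*c - x)) borel (\<lambda>x. x - c)"
    unfolding DX[symmetric] by (subst distr_distr, simp, simp)+ (simp add: comp_def)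
  have D': "distr D borel (\<lambda>x. 2*c - x) = density lborel (\<lambda>x. g (2*c - x))"
    unfolding D_def by (rule distr_refl) simp
  have inv: "distr (distr N borel (\<lambda>x. x - c)) borel (\<lambda>x. x + c) = N" if "sets N = sets borel" for N :: "real measure"
    using that by (subst distr_distr) (auto simp: comp_def intro: distr_id2 cong: measurable_cong_sets)
  show ?thesis
  proof
    assume "distr M borel (\<lambda>\<omega>. X \<omega> - c) = distr M borel (\<lambda>\<omega>. c - X \<omega>)"
    then have "distr (distr D borel (\<lambda>x. x - c)) borel (\<lambda>x. x + c) =
      distr (distr (distr D borel (\<lambda>x. 2*c - x)) borel (\<lambda>x. x - c)) borel (\<lambda>x. x + c)"
      by (simp add: e1 e2)
    then show "density lborel g = density lborel (\<lambda>x. g (2*c - x))"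
      using inv[of D] inv[of "distr D borel (\<lambda>x. 2*c - x)"] sD D' D_def by simp
  next
    assume "density lborel g = density lborel (\<lambda>x. g (2*c - x))"
    then show "distr M borel (\<lambda>\<omega>. X \<omega> - c) = distr M borel (\<lambda>\<omega>. c - X \<omega>)"
      using e1 e2 D' D_def by simp
  qed
qed



lemma ind_int:
  fixes \<phi> :: "real \<Rightarrow> real"
  assumes "integrable lborel \<phi>" "A \<in> sets borel"
  shows "integrable lborel (\<lambda>x. indicator A x * \<phi> x)"
  using integrable_mult_indicator[of A lborel \<phi>] assms by simp

lemma Phi_diff:
  fixes \<phi> :: "real \<Rightarrow> real"
  assumes "integrable lborel \<phi>" "s \<le> t"
  shows "(\<integral>u. indicator {..t} u * \<phi> u \<partial>lborel) - (\<integral>u. indicator {..s} u * \<phi> u \<partial>lborel)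
       = (\<integral>u. indicator {s<..t} u * \<phi> u \<partial>lborel)"
proof -
  have "(\<integral>u. indicator {..t} u * \<phi> u \<partial>lborel) = (\<integral>u. indicator {..s} u * \<phi> u + indicator {s<..t} u * \<phi> u \<partial>lborel)"
    using assms(2) by (intro Bochner_Integration.integral_cong) (auto simp: indicator_def)
  also have "\<dots> = (\<integral>u. indicator {..s} u * \<phi> u \<partial>lborel) + (\<integral>u. indicator {s<..t} u * \<phi> u \<partial>lborel)"
    by (rule Bochner_Integration.integral_add) (auto intro!: ind_int assms(1))
  finally show ?thesis by simp
qed

lemma Phi_cont:
  fixes \<phi> :: "real \<Rightarrow> real"
  assumes int: "integrable lborel \<phi>"
  shows "continuous_on {a..b} (\<lambda>x. \<integral>u. indicator {..x} u * \<phi> u \<partial>lborel)"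
proof -
  have [measurable]: "\<phi> \<in> borel_measurable borel" using borel_measurable_integrable[OF int] by simp
  have si: "set_integrable lborel {a..b} \<phi>"
    unfolding set_integrable_def by (auto intro!: ind_int int)
  have ion: "\<phi> integrable_on {a..b}" using set_borel_integral_eq_integral(1)[OF si] .
  have eq: "(\<integral>u. indicator {..x} u * \<phi> u \<partial>lborel) = (\<integral>u. indicator {..a} u * \<phi> u \<partial>lborel) + integral {a..x} \<phi>"
    if "x \<in> {a..b}" for x
  proof -
    have sx: "set_integrable lborel {a..x} \<phi>"
      unfolding set_integrable_def by (auto intro!: ind_int int)
    have "(\<integral>u. indicator {a<..x} u * \<phi> u \<partial>lborel) = (\<integral>u. indicator {a..x} u * \<phi> u \<partial>lborel)"
      apply (rule integral_cong_AE) apply measurable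
      using AE_lborel_singleton[of a] by eventually_elim (auto simp: indicator_def)
    also have "\<dots> = integral {a..x} \<phi>"
      using set_borel_integral_eq_integral(2)[OF sx] by (simp add: set_lebesgue_integral_def)
    finally show ?thesis using Phi_diff[OF int, of a x] that by simp
  qed
  have "continuous_on {a..b} (\<lambda>x. (\<integral>u. indicator {..a} u * \<phi> u \<partial>lborel) + integral {a..x} \<phi>)"
    by (intro continuous_intros indefinite_integral_continuous_1 ion)
  then show ?thesis by (rule continuous_on_eq) (rule eq[symmetric])
qed

lemma sup_arg:
  fixes h :: "real \<Rightarrow> real"
  assumes cont: "continuous_on {a..b} h" and ab: "a \<le> b" and ha: "h a \<le> 0"
    and step: "\<And>s t. a \<le> s \<Longrightarrow> s < t \<Longrightarrow> t \<le> b \<Longrightarrow> (\<forall>u\<in>{s<..t}. h u > 0) \<Longrightarrow> h t \<le> h s"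
  shows "h b \<le> 0"
proof (rule ccontr)
  assume hb: "\<not> h b \<le> 0"
  define S where "S = {a..b} \<inter> h -` {..0}"
  have cS: "closed S" unfolding S_def
    by (rule continuous_closed_preimage[OF cont]) auto
  have aS: "a \<in> S" using ab ha by (auto simp: S_def)
  have bdd: "bdd_above S" by (auto simp: S_def bdd_above_def)
  define s where "s = Sup S"
  have sS: "s \<in> S" unfolding s_def using closed_contains_Sup[OF _ bdd cS] aS by blast
  have as: "a \<le> s" unfolding s_def using cSup_upper[OF aS bdd] .
  have sb: "s < b" using sS hb by (auto simp: S_def less_le)
  have pos: "\<forall>u\<in>{s<..b}. h u > 0"
  proof
    fix u assume u: "u \<in> {s<..b}"
    show "h u > 0"
    proof (rule ccontr)
      assume "\<not> h u > 0"
      then have "u \<in> S" using u as by (auto simp: S_def)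
      then have "u \<le> s" unfolding s_def using cSup_upper[OF _ bdd] by blast
      then show False using u by auto
    qed
  qed
  have "h b \<le> h s" by (rule step[OF as sb order_refl pos])
  then show False using sS hb by (auto simp: S_def)
qed



context
  fixes f :: "real \<Rightarrow> real" and \<mu> \<delta> \<beta> \<gamma> :: real
  assumes nn: "\<And>x. f x \<ge> 0" and fm[measurable]: "f \<in> borel_measurable borel"
  and fint: "integrable lborel f" and f1: "(\<integral>x. f x \<partial>lborel) = 1"
  and tint: "integrable lborel (\<lambda>x. f x * x)" and tmean: "(\<integral>x. f x * x \<partial>lborel) = \<mu>"
  and pear: "\<And>x. (\<integral>t. indicator {..x} t * ((\<mu> - t) * f t) \<partial>lborel)
                 = (\<delta> * (x - \<mu>)^2 + \<beta> * (x - \<mu>) + \<gamma>) * f x"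
begin

lemma g_eq: "(\<lambda>t. (\<mu> - t) * f t) = (\<lambda>t. \<mu> * f t - f t * t)"
  by (auto simp: algebra_simps)

lemma g_int: "integrable lborel (\<lambda>t. (\<mu> - t) * f t)"
  unfolding g_eq by (intro Bochner_Integration.integrable_diff integrable_mult_right fint tint)

lemma g_total: "(\<integral>t. (\<mu> - t) * f t \<partial>lborel) = 0"
  unfolding g_eq
  by (subst Bochner_Integration.integral_diff) (auto intro!: integrable_mult_right fint tint simp: f1 tmean)

lemma ae_zero_False:
  assumes "AE t in lborel. f t = 0"
  shows False
proof -
  have "(\<integral>x. f x \<partial>lborel) = 0" using assms by (rule integral_eq_zero_AE)
  then show False using f1 by simp
qed

lemma split_int:
  fixes \<phi> :: "real \<Rightarrow> real"
  assumes "integrable lborel \<phi>"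
  shows "(\<integral>t. \<phi> t \<partial>lborel) = (\<integral>t. indicator {..x} t * \<phi> t \<partial>lborel) + (\<integral>t. indicator {x<..} t * \<phi> t \<partial>lborel)"
proof -
  have "(\<integral>t. \<phi> t \<partial>lborel) = (\<integral>t. indicator {..x} t * \<phi> t + indicator {x<..} t * \<phi> t \<partial>lborel)"
    by (intro Bochner_Integration.integral_cong) (auto simp: indicator_def)
  also have "\<dots> = (\<integral>t. indicator {..x} t * \<phi> t \<partial>lborel) + (\<integral>t. indicator {x<..} t * \<phi> t \<partial>lborel)"
    by (rule Bochner_Integration.integral_add) (auto intro!: ind_int assms)
  finally show ?thesis .
qed

lemma F_nonneg: "0 \<le> (\<integral>t. indicator {..x} t * ((\<mu> - t) * f t) \<partial>lborel)"
proof (cases "x \<le> \<mu>")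
  case True
  then show ?thesis
    by (intro Bochner_Integration.integral_nonneg) (auto simp: indicator_def intro!: mult_nonneg_nonneg nn)
next
  case False
  have "(\<integral>t. indicator {x<..} t * ((\<mu> - t) * f t) \<partial>lborel) \<le> 0"
  proof -
    have "0 \<le> (\<integral>t. - (indicator {x<..} t * ((\<mu> - t) * f t)) \<partial>lborel)"
      using False by (intro Bochner_Integration.integral_nonneg) (auto simp: indicator_def intro!: mult_nonpos_nonneg nn)
    then show ?thesis by simp
  qed
  then show ?thesis using split_int[OF g_int, of x] g_total by linarith
qed

lemma F_mu: "(\<integral>t. indicator {..\<mu>} t * ((\<mu> - t) * f t) \<partial>lborel) \<noteq> 0"
proof
  assume F0: "(\<integral>t. indicator {..\<mu>} t * ((\<mu> - t) * f t) \<partial>lborel) = 0"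
  have i1: "integrable lborel (\<lambda>t. indicator {..\<mu>} t * ((\<mu> - t) * f t))"
    by (rule ind_int[OF g_int]) simp
  have i2: "integrable lborel (\<lambda>t. - (indicator {\<mu><..} t * ((\<mu> - t) * f t)))"
    by (rule Bochner_Integration.integrable_minus, rule ind_int[OF g_int]) simp
  have A1: "AE t in lborel. indicator {..\<mu>} t * ((\<mu> - t) * f t) = 0"
    using F0 by (subst (asm) integral_nonneg_eq_0_iff_AE[OF i1])
      (auto simp: indicator_def intro!: mult_nonneg_nonneg nn)
  have "(\<integral>t. indicator {\<mu><..} t * ((\<mu> - t) * f t) \<partial>lborel) = 0"
    using split_int[OF g_int, of \<mu>] g_total F0 by linarith
  then have "(\<integral>t. - (indicator {\<mu><..} t * ((\<mu> - t) * f t)) \<partial>lborel) = 0" by simp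
  then have A2: "AE t in lborel. - (indicator {\<mu><..} t * ((\<mu> - t) * f t)) = 0"
    by (subst (asm) integral_nonneg_eq_0_iff_AE[OF i2])
      (auto simp: indicator_def intro!: AE_I2 mult_nonpos_nonneg nn)
  have "AE t in lborel. f t = 0"
    using A1 A2 AE_lborel_singleton[of \<mu>]
  proof eventually_elim
    case (elim t)
    then show ?case by (cases "t < \<mu>") (auto simp: indicator_def)
  qed
  then show False by (rule ae_zero_False)
qed

lemma gt_int: "integrable lborel (\<lambda>t. (\<mu> - t) * f (2*\<mu> - t))"
proof -
  have "integrable lborel (\<lambda>s. - ((\<mu> - s) * f s))" using g_int by simp
  then have i: "integrable lborel (\<lambda>x. (x - \<mu>) * f (2*\<mu> - x))"
    using refl_integrable[of "\<lambda>s. - ((\<mu> - s) * f s)" \<mu>] by simp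
  have eq: "(\<lambda>x. - ((x - \<mu>) * f (2*\<mu> - x))) = (\<lambda>t. (\<mu> - t) * f (2*\<mu> - t))"
    by (auto simp: algebra_simps)
  from Bochner_Integration.integrable_minus[OF i] show ?thesis unfolding eq .
qed

lemma F_refl: "(\<integral>t. indicator {..x} t * ((\<mu> - t) * f (2*\<mu> - t)) \<partial>lborel)
    = (\<integral>t. indicator {..2*\<mu> - x} t * ((\<mu> - t) * f t) \<partial>lborel)"
proof -
  define a where "a = 2*\<mu> - x"
  define h where "h s = indicator {a..} s * (- ((\<mu> - s) * f s))" for s
  have "(\<integral>t. indicator {..x} t * ((\<mu> - t) * f (2*\<mu> - t)) \<partial>lborel) = (\<integral>t. h (2*\<mu> - t) \<partial>lborel)"
    by (intro Bochner_Integration.integral_cong) (auto simp: h_def a_def indicator_def algebra_simps)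
  also have "\<dots> = (\<integral>t. h t \<partial>lborel)" by (rule refl_integral)
  also have "\<dots> = (\<integral>t. indicator {..<a} t * ((\<mu> - t) * f t) - (\<mu> - t) * f t \<partial>lborel)"
    by (intro Bochner_Integration.integral_cong) (auto simp: h_def indicator_def)
  also have "\<dots> = (\<integral>t. indicator {..<a} t * ((\<mu> - t) * f t) \<partial>lborel)"
    by (subst Bochner_Integration.integral_diff) (auto intro!: ind_int g_int simp: g_total)
  also have "\<dots> = (\<integral>t. indicator {..a} t * ((\<mu> - t) * f t) \<partial>lborel)"
    apply (rule integral_cong_AE) apply measurable
    using AE_lborel_singleton[of a] by eventually_elim (auto simp: indicator_def)
  finally show ?thesis by (simp add: a_def)
qed

lemma H_eq: "(\<integral>t. indicator {..x} t * ((\<mu> - t) * (f t - f (2*\<mu> - t))) \<partial>lborel)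
   = (\<integral>t. indicator {..x} t * ((\<mu> - t) * f t) \<partial>lborel) - (\<integral>t. indicator {..2*\<mu> - x} t * ((\<mu> - t) * f t) \<partial>lborel)"
proof -
  have "(\<integral>t. indicator {..x} t * ((\<mu> - t) * (f t - f (2*\<mu> - t))) \<partial>lborel)
     = (\<integral>t. indicator {..x} t * ((\<mu> - t) * f t) - indicator {..x} t * ((\<mu> - t) * f (2*\<mu> - t)) \<partial>lborel)"
    by (intro Bochner_Integration.integral_cong) (auto simp: algebra_simps)
  also have "\<dots> = (\<integral>t. indicator {..x} t * ((\<mu> - t) * f t) \<partial>lborel) - (\<integral>t. indicator {..x} t * ((\<mu> - t) * f (2*\<mu> - t)) \<partial>lborel)"
    by (rule Bochner_Integration.integral_diff) (auto intro!: ind_int g_int gt_int)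
  finally show ?thesis by (simp add: F_refl)
qed

lemma phi_int: "integrable lborel (\<lambda>t. (\<mu> - t) * (f t - f (2*\<mu> - t)))"
proof -
  have "integrable lborel (\<lambda>t. (\<mu> - t) * f t - (\<mu> - t) * f (2*\<mu> - t))"
    by (intro Bochner_Integration.integrable_diff g_int gt_int)
  then show ?thesis by (simp add: algebra_simps)
qed


lemma dir2:
  assumes b0: "\<beta> = 0"
  shows "AE x in lborel. f x = f (2*\<mu> - x)"
proof -
  define F where "F x = (\<integral>t. indicator {..x} t * ((\<mu> - t) * f t) \<partial>lborel)" for x
  define \<phi> where "\<phi> t = (\<mu> - t) * (f t - f (2*\<mu> - t))" for t
  define \<Phi> where "\<Phi> x = (\<integral>t. indicator {..x} t * \<phi> t \<partial>lborel)" for x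
  define q where "q x = \<delta> * (x - \<mu>)^2 + \<gamma>" for x
  have \<phi>int: "integrable lborel \<phi>" unfolding \<phi>_def by (rule phi_int)
  have HE: "\<Phi> x = F x - F (2*\<mu> - x)" for x
    unfolding \<Phi>_def F_def \<phi>_def by (rule H_eq)
  have qx: "F x = q x * f x" for x
    unfolding F_def q_def using pear[of x] b0 by simp
  have qs: "F (2*\<mu> - x) = q x * f (2*\<mu> - x)" for x
  proof -
    have "(2*\<mu> - x - \<mu>)^2 = (x - \<mu>)^2" by (simp add: power2_eq_square algebra_simps)
    then show ?thesis unfolding F_def q_def using pear[of "2*\<mu> - x"] b0 by simp
  qed
  have Fnn: "0 \<le> F x" for x unfolding F_def by (rule F_nonneg)
  have key: "0 < q t \<and> \<Phi> t = q t * (f t - f (2*\<mu> - t))" if "\<Phi> t \<noteq> 0" for t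
  proof (cases "q t \<le> 0")
    case True
    have "F t \<le> 0" unfolding qx using True nn[of t] by (simp add: mult_nonpos_nonneg)
    moreover have "F (2*\<mu> - t) \<le> 0" unfolding qs using True nn[of "2*\<mu> - t"] by (simp add: mult_nonpos_nonneg)
    ultimately have "\<Phi> t = 0" using HE[of t] Fnn[of t] Fnn[of "2*\<mu> - t"] by linarith
    then show ?thesis using that by simp
  next
    case False
    then show ?thesis using HE[of t] qx[of t] qs[of t] by (simp add: algebra_simps)
  qed
  have neg: "\<phi> t \<le> 0" if "\<mu> < t" "\<Phi> t > 0" for t
  proof -
    have "0 < q t" "0 < q t * (f t - f (2*\<mu> - t))" using key[of t] that by auto
    then have "0 < f t - f (2*\<mu> - t)" by (simp add: zero_less_mult_iff)
    then show ?thesis unfolding \<phi>_def using that(1) by (simp add: mult_nonpos_nonneg)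
  qed
  have pos: "\<phi> t \<ge> 0" if "\<mu> < t" "\<Phi> t < 0" for t
  proof -
    have "0 < q t" "q t * (f t - f (2*\<mu> - t)) < 0" using key[of t] that by auto
    then have "f t - f (2*\<mu> - t) < 0" by (simp add: mult_less_0_iff)
    then show ?thesis unfolding \<phi>_def using that(1) by (simp add: mult_nonpos_nonpos)
  qed
  have \<Phi>\<mu>: "\<Phi> \<mu> = 0" using HE[of \<mu>] by simp
  have cont: "continuous_on {a..b} \<Phi>" for a b unfolding \<Phi>_def by (rule Phi_cont[OF \<phi>int])
  have diff: "\<Phi> t - \<Phi> s = (\<integral>u. indicator {s<..t} u * \<phi> u \<partial>lborel)" if "s \<le> t" for s t
    unfolding \<Phi>_def by (rule Phi_diff[OF \<phi>int that])
  have up: "\<Phi> b \<le> 0" if "\<mu> \<le> b" for b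
  proof (rule sup_arg[OF cont that])
    show "\<Phi> \<mu> \<le> 0" using \<Phi>\<mu> by simp
    fix s t assume st: "\<mu> \<le> s" "s < t" "t \<le> b" and P: "\<forall>u\<in>{s<..t}. 0 < \<Phi> u"
    have "0 \<le> (\<integral>u. - (indicator {s<..t} u * \<phi> u) \<partial>lborel)"
    proof (rule Bochner_Integration.integral_nonneg)
      fix u show "0 \<le> - (indicator {s<..t} u * \<phi> u)"
        using P neg[of u] st by (cases "u \<in> {s<..t}") auto
    qed
    then show "\<Phi> t \<le> \<Phi> s" using diff[of s t] st by simp
  qed
  have lo: "- \<Phi> b \<le> 0" if "\<mu> \<le> b" for b
  proof (rule sup_arg[OF continuous_on_minus[OF cont] that])
    show "- \<Phi> \<mu> \<le> 0" using \<Phi>\<mu> by simp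
    fix s t assume st: "\<mu> \<le> s" "s < t" "t \<le> b" and P: "\<forall>u\<in>{s<..t}. 0 < - \<Phi> u"
    have "0 \<le> (\<integral>u. indicator {s<..t} u * \<phi> u \<partial>lborel)"
    proof (rule Bochner_Integration.integral_nonneg)
      fix u show "0 \<le> indicator {s<..t} u * \<phi> u"
        using P pos[of u] st by (cases "u \<in> {s<..t}") auto
    qed
    then show "- \<Phi> t \<le> - \<Phi> s" using diff[of s t] st by simp
  qed
  have \<Phi>0: "\<Phi> x = 0" for x
  proof (cases "\<mu> \<le> x")
    case True then show ?thesis using up[of x] lo[of x] by simp
  next
    case False
    then have "\<mu> \<le> 2*\<mu> - x" by simp
    then have "\<Phi> (2*\<mu> - x) = 0" using up lo by (meson neg_le_0_iff_le order_antisym)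
    moreover have "\<Phi> x = - \<Phi> (2*\<mu> - x)" using HE[of x] HE[of "2*\<mu> - x"] by simp
    ultimately show ?thesis by simp
  qed
  have d0: "q x * (f x - f (2*\<mu> - x)) = 0" for x
    using \<Phi>0[of x] HE[of x] qx[of x] qs[of x] by (simp add: algebra_simps)
  have d1: "q x \<noteq> 0 \<Longrightarrow> f x = f (2*\<mu> - x)" for x using d0[of x] by simp
  show ?thesis
  proof (cases "\<delta> = 0 \<and> \<gamma> = 0")
    case True
    then have "F \<mu> = 0" using qx[of \<mu>] by (simp add: q_def)
    then show ?thesis using F_mu unfolding F_def by simp
  next
    case False
    have "AE x in lborel. q x \<noteq> 0"
    proof (cases "\<delta> = 0")
      case True
      then show ?thesis using False by (simp add: q_def)
    next
      case dn: False
      define r where "r = sqrt (- \<gamma> / \<delta>)"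
      have qne: "q x \<noteq> 0" if "x \<noteq> \<mu> + r" "x \<noteq> \<mu> - r" for x
      proof
        assume "q x = 0"
        then have "(x - \<mu>)^2 = - \<gamma> / \<delta>" using dn by (simp add: q_def field_simps)
        then have "\<bar>x - \<mu>\<bar> = r" unfolding r_def by (metis real_sqrt_abs)
        then show False using that by (auto simp: abs_if split: if_splits)
      qed
      show ?thesis using AE_lborel_singleton[of "\<mu> + r"] AE_lborel_singleton[of "\<mu> - r"]
        by eventually_elim (rule qne)
    qed
    then show ?thesis by eventually_elim (rule d1)
  qed
qed

lemma dir1:
  assumes ae: "AE x in lborel. f x = f (2*c - x)"
  shows "\<beta> = 0"
proof -
  have "\<mu> = (\<integral>x. f (2*c - x) * x \<partial>lborel)"
    unfolding tmean[symmetric]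
    apply (rule integral_cong_AE) apply measurable using ae by eventually_elim simp
  also have "\<dots> = (\<integral>x. (\<lambda>s. f s * (2*c - s)) (2*c - x) \<partial>lborel)" by simp
  also have "\<dots> = (\<integral>s. f s * (2*c - s) \<partial>lborel)" by (rule refl_integral)
  also have "\<dots> = (\<integral>s. 2*c * f s - f s * s \<partial>lborel)" by (simp add: algebra_simps)
  also have "\<dots> = 2*c - \<mu>"
    by (subst Bochner_Integration.integral_diff) (auto intro!: integrable_mult_right fint tint simp: f1 tmean)
  finally have c: "c = \<mu>" by simp
  define F where "F x = (\<integral>t. indicator {..x} t * ((\<mu> - t) * f t) \<partial>lborel)" for x
  define Q where "Q x = \<delta> * (x - \<mu>)^2 + \<beta> * (x - \<mu>) + \<gamma>" for x
  have FQ: "F x = Q x * f x" for x unfolding F_def Q_def by (rule pear)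
  have Fs: "F x = F (2*\<mu> - x)" for x
  proof -
    have "(\<integral>t. indicator {..x} t * ((\<mu> - t) * (f t - f (2*\<mu> - t))) \<partial>lborel) = 0"
      apply (rule integral_eq_zero_AE) using ae by eventually_elim (simp add: c)
    then show ?thesis using H_eq[of x] unfolding F_def by simp
  qed
  have Qs: "Q (2*\<mu> - x) = Q x - 2 * \<beta> * (x - \<mu>)" for x
    by (simp add: Q_def power2_eq_square algebra_simps)
  show "\<beta> = 0"
  proof (rule ccontr)
    assume bn: "\<beta> \<noteq> 0"
    have "AE t in lborel. f t = 0"
      using ae AE_lborel_singleton[of \<mu>]
    proof eventually_elim
      case (elim x)
      have e1: "f (2*\<mu> - x) = f x" using elim c by simp
      have "Q x * f x = Q (2*\<mu> - x) * f x" using Fs[of x] FQ[of x] FQ[of "2*\<mu> - x"] e1 by simp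
      then have "(Q x - Q (2*\<mu> - x)) * f x = 0" by (simp add: left_diff_distrib)
      then have "(2 * \<beta> * (x - \<mu>)) * f x = 0" by (simp add: Qs)
      then show ?case using bn elim by simp
    qed
    then show False by (rule ae_zero_False)
  qed
qed

end

theorem lemma4p1:
  fixes M :: "'a measure" and X :: "'a \<Rightarrow> real" and f :: "real \<Rightarrow> real"
    and \<mu> \<delta> \<beta> \<gamma> :: real
  assumes "prob_space M"
    and f_nonneg: "\<And>x. f x \<ge> 0"
    and dens: "distributed M lborel X (\<lambda>x. ennreal (f x))"
    and int: "integrable M X"
    and mean: "prob_space.expectation M X = \<mu>"
    and pearson: "\<And>x. (LINT t:{..x}|lborel. (\<mu> - t) * f t)
                   = (\<delta> * (x - \<mu>)^2 + \<beta> * (x - \<mu>) + \<gamma>) * f x"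
  shows "symmetric_rv M X \<longleftrightarrow> \<beta> = 0"
proof -
  interpret P: prob_space M by fact
  have fm[measurable]: "f \<in> borel_measurable borel"
    using distributed_real_measurable[OF _ dens] f_nonneg by simp
  have f_int: "integrable lborel f"
    using distributed_integrable[OF dens, of "\<lambda>_. 1"] f_nonneg by simp
  have f1: "(\<integral>x. f x \<partial>lborel) = 1"
    using distributed_integral[OF dens, of "\<lambda>_. 1"] f_nonneg P.prob_space by simp
  have tint: "integrable lborel (\<lambda>x. f x * x)"
    using distributed_integrable[OF dens, of "\<lambda>x. x"] f_nonneg int by simp
  have tmean: "(\<integral>x. f x * x \<partial>lborel) = \<mu>"
    using distributed_integral[OF dens, of "\<lambda>x. x"] f_nonneg mean by simp
  have pear: "(\<integral>t. indicator {..x} t * ((\<mu> - t) * f t) \<partial>lborel)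
                 = (\<delta> * (x - \<mu>)^2 + \<beta> * (x - \<mu>) + \<gamma>) * f x" for x
    using pearson[of x] by (simp add: set_lebesgue_integral_def)
  have fin: "(\<integral>\<^sup>+x. ennreal (f x) \<partial>lborel) \<noteq> \<infinity>"
    using nn_integral_eq_integral[OF f_int] f_nonneg f1 by simp
  have char: "symmetric_rv M X \<longleftrightarrow> (\<exists>c. AE x in lborel. f x = f (2*c - x))"
  proof -
    have "distr M borel (\<lambda>\<omega>. X \<omega> - c) = distr M borel (\<lambda>\<omega>. c - X \<omega>)
        \<longleftrightarrow> (AE x in lborel. f x = f (2*c - x))" for c
    proof -
      have "distr M borel (\<lambda>\<omega>. X \<omega> - c) = distr M borel (\<lambda>\<omega>. c - X \<omega>)
        \<longleftrightarrow> density lborel (\<lambda>x. ennreal (f x)) = density lborel (\<lambda>x. ennreal (f (2*c - x)))"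
        using sym_iff[OF dens, of c] by simp
      also have "\<dots> \<longleftrightarrow> (AE x in lborel. ennreal (f x) = ennreal (f (2*c - x)))"
        by (rule finite_density_unique[OF _ _ _ _ fin]) auto
      also have "\<dots> \<longleftrightarrow> (AE x in lborel. f x = f (2*c - x))"
        using f_nonneg by simp
      finally show ?thesis .
    qed
    then show ?thesis unfolding symmetric_rv_def by simp
  qed
  note D1 = dir1[OF f_nonneg fm f_int f1 tint tmean pear]
  note D2 = dir2[OF f_nonneg fm f_int f1 tint tmean pear]
  show ?thesis
  proof
    assume "symmetric_rv M X"
    then obtain c where "AE x in lborel. f x = f (2*c - x)" using char by blast
    then show "\<beta> = 0" by (rule D1)
  next
    assume "\<beta> = 0"
    then have "AE x in lborel. f x = f (2*\<mu> - x)" by (rule D2)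
    then show "symmetric_rv M X" using char by blast
  qed
qed

end
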